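(* Let $\alpha>0$, $N\ge1$, $f:\mathbb{R}\to(0,\infty)$ with $\sqrt f$ Lipschitz, $f\in C^4(\mathbb{R})$ and $(\sqrt f)^{(k)}$ bounded for $1\le k\le4$, and let $\mu$ be a centered probability measure on $\mathbb{R}$ with finite fourth moment. For $g\in C^2_b(\mathbb{R})$ let $A^Ng(x)=-\alpha xg'(x)+Nf(x)\int_{\mathbb{R}}[g(x+u/\sqrt N)-g(x)]d\mu(u)$. Then there is a constant $C_N>0$ (possibly depending on $N$, but not on $M$ or $g$) such that for all $g\in C^2_b(\mathbb{R})$ and all $M>0$, $$\sup_{x\in[-M,M]}|(A^Ng)'(x)|\le C_N\|g\|_{2,\infty}(1+M^2).$$
   Context: $\|g\|_{2,\infty}=\|g\|_\infty+\|g'\|_\infty+\|g''\|_\infty$. *)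

theory Defs
  imports "HOL-Analysis.Analysis" "HOL-Probability.Probability"
begin

definition nderiv :: "nat \<Rightarrow> (real \<Rightarrow> real) \<Rightarrow> real \<Rightarrow> real" where
  "nderiv k f = (deriv ^^ k) f"

definition Ck :: "nat \<Rightarrow> (real \<Rightarrow> real) \<Rightarrow> bool" where
  "Ck k f \<longleftrightarrow> (\<forall>j<k. \<forall>x. nderiv j f differentiable at x) \<and> continuous_on UNIV (nderiv k f)"

definition C2b :: "(real \<Rightarrow> real) \<Rightarrow> bool" where
  "C2b g \<longleftrightarrow> Ck 2 g \<and> (\<forall>j\<le>2. bounded (range (nderiv j g)))"

definition sup_norm :: "(real \<Rightarrow> real) \<Rightarrow> real" where
  "sup_norm g = (SUP x. \<bar>g x\<bar>)"

definition norm2inf :: "(real \<Rightarrow> real) \<Rightarrow> real" where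
  "norm2inf g = sup_norm g + sup_norm (deriv g) + sup_norm (deriv (deriv g))"

definition genA :: "real \<Rightarrow> nat \<Rightarrow> (real \<Rightarrow> real) \<Rightarrow> real measure \<Rightarrow> (real \<Rightarrow> real) \<Rightarrow> real \<Rightarrow> real" where
  "genA \<alpha> N f \<mu> g x = - \<alpha> * x * deriv g x
     + real N * f x * (\<integral>u. (g (x + u / sqrt (real N)) - g x) \<partial>\<mu>)"

end

theory Submission
  imports Defs
begin

lemma mvt_sym:
  assumes "\<And>t. (\<phi> has_real_derivative \<phi>' t) (at t)"
  shows "\<exists>z. \<bar>z - a\<bar> \<le> \<bar>b - a\<bar> \<and> \<phi> b - \<phi> a = (b - a) * \<phi>' z"
proof (cases a b rule: linorder_cases)
  case less
  from MVT2[OF less assms] obtain z where "a < z" "z < b" "\<phi> b - \<phi> a = (b - a) * \<phi>' z" by blast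
  then show ?thesis by (intro exI[of _ z]) auto
next
  case equal then show ?thesis by auto
next
  case greater
  from MVT2[OF greater assms] obtain z where "b < z" "z < a" "\<phi> a - \<phi> b = (a - b) * \<phi>' z" by blast
  then show ?thesis by (intro exI[of _ z]) (auto simp: algebra_simps)
qed

lemma lip_from_deriv:
  assumes "\<And>t. (\<phi> has_real_derivative \<phi>' t) (at t)" "\<And>t. \<bar>\<phi>' t\<bar> \<le> B"
  shows "\<bar>\<phi> b - \<phi> a\<bar> \<le> B * \<bar>b - a\<bar>"
proof -
  obtain z where "\<phi> b - \<phi> a = (b - a) * \<phi>' z" using mvt_sym[OF assms(1)] by blast
  then show ?thesis using assms(2)[of z] by (simp add: abs_mult mult_right_mono mult.commute)
qed

lemma taylor1:
  assumes "\<And>t. (h has_real_derivative h' t) (at t)" "\<And>s t. \<bar>h' s - h' t\<bar> \<le> B * \<bar>s - t\<bar>"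
  shows "\<bar>h b - h a - (b - a) * h' a\<bar> \<le> B * (b - a)\<^sup>2"
proof -
  obtain z where z: "\<bar>z - a\<bar> \<le> \<bar>b - a\<bar>" "h b - h a = (b - a) * h' z" using mvt_sym[OF assms(1)] by blast
  have B: "0 \<le> B" using assms(2)[of 1 0] by simp
  have "\<bar>h b - h a - (b - a) * h' a\<bar> = \<bar>b - a\<bar> * \<bar>h' z - h' a\<bar>" using z(2)
    by (simp add: abs_mult[symmetric] algebra_simps)
  also have "\<dots> \<le> \<bar>b - a\<bar> * (B * \<bar>b - a\<bar>)"
    using assms(2)[of z a] z(1) B by (intro mult_left_mono) (auto intro: order_trans mult_left_mono)
  also have "\<dots> = B * (b - a)\<^sup>2" by (simp add: power2_eq_square abs_mult_self_eq)
  finally show ?thesis .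
qed

lemma sq_div_abs: "y \<noteq> (x::real) \<Longrightarrow> B * (y - x)\<^sup>2 / \<bar>y - x\<bar> = B * \<bar>y - x\<bar>"
proof -
  assume "y \<noteq> x"
  define d where "d = \<bar>y - x\<bar>"
  have d: "d \<noteq> 0" using \<open>y \<noteq> x\<close> by (simp add: d_def)
  have "(y - x)\<^sup>2 = d\<^sup>2" by (simp add: d_def)
  then have "B * (y - x)\<^sup>2 / \<bar>y - x\<bar> = B * d\<^sup>2 / d" by (simp add: d_def)
  also have "\<dots> = B * d" using d by (simp add: power2_eq_square)
  finally show ?thesis by (simp add: d_def)
qed

lemma int_meas:
  fixes h :: "real \<Rightarrow> real"
  assumes "sets \<mu> = sets borel" "continuous_on UNIV h"
  shows "(\<lambda>u. h (x + u / s)) \<in> borel_measurable \<mu>"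
proof -
  have "continuous_on UNIV (\<lambda>u. h (x + u * (1 / s)))"
    by (intro continuous_on_compose2[OF assms(2)] continuous_intros) auto
  then have "continuous_on UNIV (\<lambda>u. h (x + u / s))" by simp
  then have "(\<lambda>u. h (x + u / s)) \<in> borel_measurable borel" by (rule borel_measurable_continuous_onI)
  moreover have eq: "borel_measurable \<mu> = borel_measurable borel"
    by (rule measurable_cong_sets[OF assms(1) refl])
  ultimately show ?thesis by (simp only: eq)
qed

lemma int_integrable:
  fixes h :: "real \<Rightarrow> real"
  assumes "prob_space \<mu>" "sets \<mu> = sets borel" "continuous_on UNIV h" "\<And>t. \<bar>h t\<bar> \<le> B"
  shows "integrable \<mu> (\<lambda>u. h (x + u / s))"
proof -
  interpret prob_space \<mu> by fact
  show ?thesis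
    by (rule integrable_const_bound[where B=B]) (use assms int_meas in auto)
qed

lemma deriv_int:
  fixes h h' :: "real \<Rightarrow> real"
  assumes "prob_space \<mu>" "sets \<mu> = sets borel"
    and der: "\<And>t. (h has_real_derivative h' t) (at t)"
    and hb: "\<And>t. \<bar>h t\<bar> \<le> B0" and h'b: "\<And>t. \<bar>h' t\<bar> \<le> B1"
    and lip: "\<And>s t. \<bar>h' s - h' t\<bar> \<le> B * \<bar>s - t\<bar>"
  shows "((\<lambda>x. \<integral>u. h (x + u / s) \<partial>\<mu>) has_real_derivative (\<integral>u. h' (x + u / s) \<partial>\<mu>)) (at x)"
proof -
  interpret prob_space \<mu> by fact
  have B: "0 \<le> B" using lip[of 1 0] by simp
  have ch: "continuous_on UNIV h"
    using der by (meson DERIV_isCont continuous_at_imp_continuous_on)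
  have ch': "continuous_on UNIV h'"
    by (rule lipschitz_on_continuous_on[of B]) (use lip B in \<open>auto simp: lipschitz_on_def dist_real_def\<close>)
  note I = int_integrable[OF assms(1,2) ch hb] int_integrable[OF assms(1,2) ch' h'b]
  define H where "H = (\<lambda>x. \<integral>u. h (x + u / s) \<partial>\<mu>)"
  define D where "D = (\<integral>u. h' (x + u / s) \<partial>\<mu>)"
  have key: "\<bar>H y - H x - (y - x) * D\<bar> \<le> B * (y - x)\<^sup>2" for y
  proof -
    have "H y - H x - (y - x) * D = (\<integral>u. h (y + u / s) - h (x + u / s) - (y - x) * h' (x + u / s) \<partial>\<mu>)"
      unfolding H_def D_def using I by (simp add: Bochner_Integration.integral_diff)
    also have "\<bar>\<dots>\<bar> \<le> (\<integral>u. B * (y - x)\<^sup>2 \<partial>\<mu>)"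
    proof (rule integral_abs_bound_integral)
      show "integrable \<mu> (\<lambda>u. h (y + u / s) - h (x + u / s) - (y - x) * h' (x + u / s))"
        using I by auto
      show "integrable \<mu> (\<lambda>u. B * (y - x)\<^sup>2)" by simp
      fix u
      show "\<bar>h (y + u / s) - h (x + u / s) - (y - x) * h' (x + u / s)\<bar> \<le> B * (y - x)\<^sup>2"
        using taylor1[OF der lip, of "y + u / s" "x + u / s"] by simp
    qed
    also have "\<dots> = B * (y - x)\<^sup>2" by (simp add: prob_space)
    finally show ?thesis .
  qed
  have "((\<lambda>y. (H y - H x) / (y - x)) \<longlongrightarrow> D) (at x)"
  proof (rule LIM_zero_cancel, rule Lim_null_comparison)
    show "\<forall>\<^sub>F y in at x. norm ((H y - H x) / (y - x) - D) \<le> B * \<bar>y - x\<bar>"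
      unfolding eventually_at_filter
    proof (intro always_eventually allI impI)
      fix y assume "y \<noteq> x"
      then have "norm ((H y - H x) / (y - x) - D) = \<bar>H y - H x - (y - x) * D\<bar> / \<bar>y - x\<bar>"
      proof -
        have "(H y - H x) / (y - x) - D = (H y - H x - (y - x) * D) / (y - x)" using \<open>y \<noteq> x\<close> by (simp add: field_simps)
        then show ?thesis by (simp add: abs_divide)
      qed
      also have "\<dots> \<le> B * (y - x)\<^sup>2 / \<bar>y - x\<bar>"
        using key[of y] by (intro divide_right_mono) auto
      also have "\<dots> = B * \<bar>y - x\<bar>" using \<open>y \<noteq> x\<close> by (rule sq_div_abs)
      finally show "norm ((H y - H x) / (y - x) - D) \<le> B * \<bar>y - x\<bar>" .
    qed
    show "((\<lambda>y. B * \<bar>y - x\<bar>) \<longlongrightarrow> 0) (at x)"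
    proof -
      have "((\<lambda>y. B * \<bar>y - x\<bar>) \<longlongrightarrow> B * \<bar>x - x\<bar>) (at x)"
        by (intro tendsto_intros)
      then show ?thesis by simp
    qed
  qed
  then show ?thesis unfolding has_field_derivative_iff H_def D_def .
qed

lemma sup_norm_ge:
  assumes "bounded (range h)"
  shows "\<bar>h t\<bar> \<le> sup_norm h"
proof -
  obtain B where B: "\<forall>y\<in>range h. norm y \<le> B" using assms bounded_iff by blast
  have "bdd_above (range (\<lambda>x. \<bar>h x\<bar>))" using B by (intro bdd_aboveI[of _ B]) auto
  then show ?thesis unfolding sup_norm_def by (rule cSUP_upper[OF UNIV_I])
qed

lemma nderiv_simps: "nderiv 0 h = h" "nderiv 1 h = deriv h" "nderiv 2 h = deriv (deriv h)"
  by (simp_all add: nderiv_def numeral_2_eq_2)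

theorem lemma5p1:
  fixes \<alpha> :: real and N :: nat and f :: "real \<Rightarrow> real" and \<mu> :: "real measure"
  assumes "\<alpha> > 0" and "N \<ge> 1"
    and "\<forall>x. f x > 0"
    and "\<exists>L. L-lipschitz_on UNIV (\<lambda>x. sqrt (f x))"
    and "Ck 4 f"
    and "\<forall>k\<in>{1..4}. bounded (range (nderiv k (\<lambda>x. sqrt (f x))))"
    and "prob_space \<mu>" and "sets \<mu> = sets borel"
    and "integrable \<mu> (\<lambda>u. u ^ 4)"
    and "(\<integral>u. u \<partial>\<mu>) = 0"
  shows "\<exists>C>0. \<forall>g. C2b g \<longrightarrow> (\<forall>M>0.
           (\<forall>x\<in>{-M..M}. genA \<alpha> N f \<mu> g differentiable at x \<and>
              \<bar>deriv (genA \<alpha> N f \<mu> g) x\<bar> \<le> C * norm2inf g * (1 + M\<^sup>2)))"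
proof -
  interpret P: prob_space \<mu> by fact
  note pos = assms(3)
  obtain L where L: "L-lipschitz_on UNIV (\<lambda>x. sqrt (f x))" using assms(4) by blast
  have L0: "0 \<le> L" using L by (rule lipschitz_on_nonneg)
  obtain K1 where K1: "\<forall>y\<in>range (deriv (\<lambda>x. sqrt (f x))). norm y \<le> K1"
  proof -
    have "bounded (range (nderiv 1 (\<lambda>x. sqrt (f x))))" using assms(6) by auto
    then have "bounded (range (deriv (\<lambda>x. sqrt (f x))))" by (simp only: nderiv_simps)
    then show ?thesis using that bounded_iff by blast
  qed
  have K1': "\<bar>deriv (\<lambda>x. sqrt (f x)) t\<bar> \<le> K1" for t using K1 by auto
  have K10: "0 \<le> K1" using K1'[of 0] by simp
  have fdiff: "f differentiable at t" for t
    using assms(5) unfolding Ck_def by (metis nderiv_simps(1) zero_less_numeral)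
  have fder: "(f has_real_derivative deriv f t) (at t)" for t
    using fdiff DERIV_deriv_iff_real_differentiable by blast
  define s0 where "s0 = sqrt (f 0)"
  have s00: "0 \<le> s0" using pos[rule_format, of 0] by (simp add: s0_def)
  have sqf: "sqrt (f t) \<le> s0 + L * \<bar>t\<bar>" for t
    using lipschitz_onD[OF L, of t 0] by (simp add: s0_def dist_real_def)
  have f'b: "\<bar>deriv f t\<bar> \<le> 2 * K1 * sqrt (f t)" for t
  proof -
    have "((\<lambda>x. sqrt (f x)) has_real_derivative (deriv f t * (inverse (sqrt (f t)) / 2))) (at t)"
      using DERIV_chain2[OF DERIV_real_sqrt[OF pos[rule_format, of t]] fder[of t]] by (simp add: mult.commute)
    then have "deriv (\<lambda>x. sqrt (f x)) t = deriv f t * (inverse (sqrt (f t)) / 2)"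
      by (rule DERIV_imp_deriv)
    then have "\<bar>deriv f t\<bar> * (inverse (sqrt (f t)) / 2) \<le> K1" using K1'[of t] pos[rule_format, of t]
      by (simp add: abs_mult)
    moreover have "sqrt (f t) > 0" using pos by simp
    ultimately show ?thesis by (simp add: field_simps)
  qed
  define sN where "sN = sqrt (real N)"
  define C where "C = 2 * \<alpha> + 4 * real N * K1 * (s0 + L) + 2 * real N * (2 * s0\<^sup>2 + 2 * L\<^sup>2) + 1"
  have C0: "C > 0" unfolding C_def using assms(1) K10 L0 s00 by (simp add: add_pos_nonneg)
  show ?thesis
  proof (intro exI[of _ C] conjI allI impI ballI)
    show "C > 0" by fact
    fix g M x assume g: "C2b g" and M: "M > (0::real)" and x: "x \<in> {-M..M}"
    define B0 where "B0 = sup_norm g"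
    define B1 where "B1 = sup_norm (deriv g)"
    define B2 where "B2 = sup_norm (deriv (deriv g))"
    have bd: "bounded (range g)" "bounded (range (deriv g))" "bounded (range (deriv (deriv g)))"
      using g unfolding C2b_def by (metis le_refl nderiv_simps one_le_numeral zero_le)+
    have gb: "\<bar>g t\<bar> \<le> B0" "\<bar>deriv g t\<bar> \<le> B1" "\<bar>deriv (deriv g) t\<bar> \<le> B2" for t
      using sup_norm_ge[OF bd(1)] sup_norm_ge[OF bd(2)] sup_norm_ge[OF bd(3)] by (auto simp: B0_def B1_def B2_def)
    have gd: "g differentiable at t" "deriv g differentiable at t" for t
      using g unfolding C2b_def Ck_def by (metis nderiv_simps(1,2) one_less_numeral_iff pos2 semiring_norm(76))+
    have gder: "(g has_real_derivative deriv g t) (at t)" "(deriv g has_real_derivative deriv (deriv g) t) (at t)" for t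
      using gd DERIV_deriv_iff_real_differentiable by blast+
    have lipg': "\<bar>deriv g a - deriv g b\<bar> \<le> B2 * \<bar>a - b\<bar>" for a b
      by (rule lip_from_deriv[OF gder(2) gb(3)])
    define G where "G = (\<lambda>x. \<integral>u. g (x + u / sN) \<partial>\<mu>)"
    define G' where "G' = (\<lambda>x. \<integral>u. deriv g (x + u / sN) \<partial>\<mu>)"
    have Gder: "(G has_real_derivative G' t) (at t)" for t
      unfolding G_def G'_def by (rule deriv_int[OF assms(7,8) gder(1) gb(1) gb(2) lipg'])
    have cg: "continuous_on UNIV g" "continuous_on UNIV (deriv g)"
      using gder by (meson DERIV_isCont continuous_at_imp_continuous_on)+
    have Ig: "integrable \<mu> (\<lambda>u. g (t + u / sN))" for t
      by (rule int_integrable[OF assms(7,8) cg(1) gb(1)])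
    have Ig': "integrable \<mu> (\<lambda>u. deriv g (t + u / sN))" for t
      by (rule int_integrable[OF assms(7,8) cg(2) gb(2)])
    have Gb: "\<bar>G t\<bar> \<le> B0" for t
    proof -
      have "\<bar>G t\<bar> \<le> (\<integral>u. B0 \<partial>\<mu>)" unfolding G_def
        by (rule integral_abs_bound_integral[OF Ig]) (auto simp: gb)
      then show ?thesis by (simp add: P.prob_space)
    qed
    have G'b: "\<bar>G' t\<bar> \<le> B1" for t
    proof -
      have "\<bar>G' t\<bar> \<le> (\<integral>u. B1 \<partial>\<mu>)" unfolding G'_def
        by (rule integral_abs_bound_integral[OF Ig']) (auto simp: gb)
      then show ?thesis by (simp add: P.prob_space)
    qed
    have Aeq: "genA \<alpha> N f \<mu> g = (\<lambda>t. - \<alpha> * t * deriv g t + real N * f t * (G t - g t))"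
    proof
      fix t
      have "(\<integral>u. (g (t + u / sqrt (real N)) - g t) \<partial>\<mu>) = G t - g t"
        unfolding G_def sN_def using Ig[of t] by (simp add: Bochner_Integration.integral_diff P.prob_space sN_def)
      then show "genA \<alpha> N f \<mu> g t = - \<alpha> * t * deriv g t + real N * f t * (G t - g t)"
        by (simp add: genA_def)
    qed
    define E where "E = - \<alpha> * deriv g x - \<alpha> * x * deriv (deriv g) x
       + real N * (deriv f x * (G x - g x) + f x * (G' x - deriv g x))"
    have Ader: "(genA \<alpha> N f \<mu> g has_real_derivative E) (at x)"
      unfolding Aeq E_def
      by (rule derivative_eq_intros gder fder Gder refl | simp)+ (simp add: algebra_simps)
    show "genA \<alpha> N f \<mu> g differentiable at x"
      using Ader real_differentiable_def by blast
    have dA: "deriv (genA \<alpha> N f \<mu> g) x = E" using Ader by (rule DERIV_imp_deriv)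
    have xM: "\<bar>x\<bar> \<le> M" using x by auto
    have B00: "0 \<le> B0" "0 \<le> B1" "0 \<le> B2" using gb[of 0] by auto
    define R where "R = s0 + L * M"
    have R0: "0 \<le> R" using s00 L0 M by (simp add: R_def)
    have sqfx: "sqrt (f x) \<le> R" using sqf[of x] xM L0 unfolding R_def by (smt (verit) mult_left_mono)
    have fx: "f x \<le> R\<^sup>2"
    proof -
      have "f x = (sqrt (f x))\<^sup>2" using pos[rule_format, of x] by simp
      also have "\<dots> \<le> R\<^sup>2" using sqfx pos[rule_format, of x] by (intro power_mono) auto
      finally show ?thesis .
    qed
    have fx0: "0 \<le> f x" using pos[rule_format, of x] by simp
    have t1: "\<bar>\<alpha> * deriv g x\<bar> \<le> \<alpha> * B1" using gb(2)[of x] assms(1) by (simp add: abs_mult)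
    have t2: "\<bar>\<alpha> * x * deriv (deriv g) x\<bar> \<le> \<alpha> * (M * B2)"
      using gb(3)[of x] assms(1) xM by (simp add: abs_mult mult_mono B00)
    have t3: "\<bar>deriv f x * (G x - g x)\<bar> \<le> (2 * K1 * R) * (2 * B0)"
    proof -
      have a: "\<bar>deriv f x\<bar> \<le> 2 * K1 * R" using f'b[of x] sqfx K10
        by (smt (verit) mult_left_mono)
      have b: "\<bar>G x - g x\<bar> \<le> 2 * B0" using Gb[of x] gb(1)[of x] by simp
      show ?thesis unfolding abs_mult by (rule mult_mono[OF a b]) (use K10 R0 in auto)
    qed
    have t4: "\<bar>f x * (G' x - deriv g x)\<bar> \<le> R\<^sup>2 * (2 * B1)"
    proof -
      have b: "\<bar>G' x - deriv g x\<bar> \<le> 2 * B1" using G'b[of x] gb(2)[of x] by simp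
      show ?thesis unfolding abs_mult using fx fx0 by (intro mult_mono[OF _ b]) auto
    qed
    have Eb: "\<bar>E\<bar> \<le> \<alpha> * B1 + \<alpha> * (M * B2) + real N * ((2 * K1 * R) * (2 * B0) + R\<^sup>2 * (2 * B1))"
    proof -
      have "\<bar>real N * (deriv f x * (G x - g x) + f x * (G' x - deriv g x))\<bar>
            \<le> real N * ((2 * K1 * R) * (2 * B0) + R\<^sup>2 * (2 * B1))"
      proof -
        have "\<bar>deriv f x * (G x - g x) + f x * (G' x - deriv g x)\<bar> \<le> (2 * K1 * R) * (2 * B0) + R\<^sup>2 * (2 * B1)"
          using t3 t4 abs_triangle_ineq[of "deriv f x * (G x - g x)" "f x * (G' x - deriv g x)"] by linarith
        then show ?thesis by (simp add: abs_mult mult_left_mono)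
      qed
      then show ?thesis unfolding E_def using t1 t2 by linarith
    qed
    define n where "n = norm2inf g"
    have n: "n = B0 + B1 + B2" by (simp add: n_def norm2inf_def B0_def B1_def B2_def)
    define Q where "Q = 1 + M\<^sup>2"
    have Q: "1 \<le> Q" "M \<le> Q" "M\<^sup>2 \<le> Q"
    proof -
      show "1 \<le> Q" "M\<^sup>2 \<le> Q" unfolding Q_def by auto
      show "M \<le> Q"
      proof (cases "M \<le> 1")
        case True then show ?thesis unfolding Q_def using zero_le_power2[of M] by linarith
      next
        case False
        then have "M * 1 \<le> M * M" using M by (intro mult_left_mono) auto
        then show ?thesis unfolding Q_def by (simp add: power2_eq_square)
      qed
    qed
    have n0: "0 \<le> n" using B00 n by simp
    have nQ: "B \<le> n \<Longrightarrow> 0 \<le> B \<Longrightarrow> B \<le> n * Q" for B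
    proof -
      assume "B \<le> n" "0 \<le> B"
      have "n * 1 \<le> n * Q" using n0 Q(1) by (rule mult_left_mono[rotated])
      then show ?thesis using \<open>B \<le> n\<close> by simp
    qed
    have e1: "\<alpha> * B1 \<le> \<alpha> * (n * Q)"
      using nQ[of B1] n B00 assms(1) by (intro mult_left_mono) auto
    have e2: "\<alpha> * (M * B2) \<le> \<alpha> * (n * Q)"
    proof -
      have "M * B2 \<le> Q * n" using Q(2) n B00 M by (intro mult_mono) auto
      then show ?thesis using assms(1) by (simp add: mult.commute)
    qed
    have e3: "(2 * K1 * R) * (2 * B0) \<le> 4 * K1 * (s0 + L) * (n * Q)"
    proof -
      have "s0 * 1 \<le> s0 * Q" using s00 Q(1) by (rule mult_left_mono[rotated])
      moreover have "L * M \<le> L * Q" using L0 Q(2) by (rule mult_left_mono[rotated])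
      ultimately have "R \<le> (s0 + L) * Q" unfolding R_def by (simp add: distrib_right)
      then have "R * B0 \<le> ((s0 + L) * Q) * n" using B00 n R0 by (intro mult_mono) auto
      then have "K1 * (R * B0) \<le> K1 * (((s0 + L) * Q) * n)" using K10 by (rule mult_left_mono)
      then show ?thesis by (simp add: algebra_simps)
    qed
    have e4: "R\<^sup>2 * (2 * B1) \<le> 2 * (2 * s0\<^sup>2 + 2 * L\<^sup>2) * (n * Q)"
    proof -
      have sq: "R\<^sup>2 + (s0 - L * M)\<^sup>2 = 2 * s0\<^sup>2 + 2 * (L\<^sup>2 * M\<^sup>2)"
        unfolding R_def by (simp add: power2_eq_square algebra_simps)
      have "R\<^sup>2 \<le> 2 * s0\<^sup>2 + 2 * (L\<^sup>2 * M\<^sup>2)" using sq zero_le_power2[of "s0 - L * M"] by linarith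
      also have "\<dots> \<le> (2 * s0\<^sup>2 + 2 * L\<^sup>2) * Q"
      proof -
        have "s0\<^sup>2 * 1 \<le> s0\<^sup>2 * Q" using Q(1) by (intro mult_left_mono) auto
        moreover have "L\<^sup>2 * M\<^sup>2 \<le> L\<^sup>2 * Q" using Q(3) by (intro mult_left_mono) auto
        ultimately show ?thesis by (simp add: algebra_simps)
      qed
      finally have "R\<^sup>2 \<le> (2 * s0\<^sup>2 + 2 * L\<^sup>2) * Q" .
      then have "R\<^sup>2 * B1 \<le> ((2 * s0\<^sup>2 + 2 * L\<^sup>2) * Q) * n" using B00 n Q(1) by (intro mult_mono) auto
      then show ?thesis by (simp add: algebra_simps)
    qed
    have "\<bar>E\<bar> \<le> (C - 1) * (n * Q)"
    proof -
      have "\<bar>E\<bar> \<le> \<alpha> * (n * Q) + \<alpha> * (n * Q) + real N * (4 * K1 * (s0 + L) * (n * Q) + 2 * (2 * s0\<^sup>2 + 2 * L\<^sup>2) * (n * Q))"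
        using Eb e1 e2 e3 e4 mult_left_mono[OF add_mono[OF e3 e4], of "real N"] by linarith
      then show ?thesis unfolding C_def by (simp add: algebra_simps)
    qed
    also have "\<dots> \<le> C * (n * Q)"
    proof -
      have "0 \<le> n * Q" using n0 Q(1) by simp
      then show ?thesis by (simp add: algebra_simps)
    qed
    finally show "\<bar>deriv (genA \<alpha> N f \<mu> g) x\<bar> \<le> C * norm2inf g * (1 + M\<^sup>2)"
      unfolding dA n_def Q_def by (simp add: mult.assoc)
  qed
qed

end
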